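(* Suppose Assumption 2 holds. Consider the $N$-armed system at time $t$ and suppose the OLC condition holds for the set of all $N$ arms, i.e. with $n=N$ and $z(s)=NX_t([N],s)$. If all $N$ arms take actions according to Optimal Local Control applied to $[N]$, then $$\mathbb E\big[X_{t+1}([N])-\mu^*\,\big|\,X_t\big]=(X_t([N])-\mu^* )\Phi .$$
   Context: Single-armed MDP $(\mathbb S,\mathbb A,P,r)$ with finite $\mathbb S$, $\mathbb A=\{0,1\}$, budget fraction $\alpha\in(0,1)$; in the $N$-armed system ($\alpha N$ integer) arms transition independently according to $P$ given their states and actions. $S_t(i)$ is the state of arm $i$ at time $t$; for $D\subseteq[N]$, $X_t(D)=(X_t(D,s))_s$ with $X_t(D,s)=\frac1N\#\{i\in D:S_t(i)=s\}$ (row vector). LP relaxation: maximize $\sum_{s,a}r(s,a)y(s,a)$ over $y\ge0$ subject to $\sum_sy(s,1)=\alpha$, $\sum_{s',a}y(s',a)P(s',a,s)=\sum_ay(s,a)$ for all $s$, $\sum_{s,a}y(s,a)=1$; $y^*$ is a fixed optimal solution. $\bar\pi^*(a|s)=y^*(s,a)/(y^*(s,0)+y^*(s,1))$ if the denominator is positive, else $1/2$; $P_{\bar\pi^*}(s,s')=\sum_a\bar\pi^*(a|s)P(s,a,s')$; $\mu^*(s)=y^*(s,0)+y^*(s,1)$ (row vector). Assumption 2: there is a unique state $\tilde s$ with $y^*(\tilde s,0)>0$, $y^*(\tilde s,1)>0$. $\Phi=P_{\bar\pi^*}-\mathbf 1^\top\mu^*-(c-\alpha\mathbf 1)^\top(P_1(\tilde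 s)-P_0(\tilde s))$ with $c=(\bar\pi^*(1|s))_s$, $P_a(\tilde s)=(P(\tilde s,a,s))_s$, $\mathbf 1$ the all-ones row vector. $S^+=\{s:y^*(s,1)>0,y^*(s,0)=0\}$, $S^-=\{s:y^*(s,1)=0,y^*(s,0)>0\}$, $S^\emptyset=\{s:y^*(s,1)=y^*(s,0)=0\}$. Randomized rounding of $c\ge0$: $\lceil c\rceil$ w.p. $c-\lfloor c\rfloor$, else $\lfloor c\rfloor$. Optimal Local Control (OLC) applied to a set of $n$ arms with $z(s)$ arms in state $s$, defined under the OLC condition $\sum_{s\neq\tilde s}\bar\pi^*(1|s)z(s)\le\alpha n-|S^\emptyset|-1$ and $\sum_{s\neq\tilde s}\bar\pi^*(0|s)z(s)\le(1-\alpha)n-|S^\emptyset|-1$: let $B$ be a randomized rounding of $\alpha n$; activate all arms in $S^+$, none in $S^-$, a randomized rounding of $z(s)/2$ arms in each $s\in S^\emptyset$, and arms in state $\tilde s$ so that exactly $B$ arms are active. *)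

theory Defs
  imports "HOL-Probability.Product_PMF"
begin

text \<open>Actions: False = passive (action 0), True = active (action 1).
  The single-armed kernel is P s a :: 's pmf, so P(s,a,s') = pmf (P s a) s'.\<close>

definition lp_feasible :: "('s::finite \<Rightarrow> bool \<Rightarrow> 's pmf) \<Rightarrow> real \<Rightarrow> ('s \<Rightarrow> bool \<Rightarrow> real) \<Rightarrow> bool" where
  "lp_feasible P \<alpha> y \<longleftrightarrow>
     (\<forall>s a. y s a \<ge> 0) \<and>
     (\<Sum>s\<in>UNIV. y s True) = \<alpha> \<and>
     (\<forall>s. (\<Sum>s'\<in>UNIV. \<Sum>a\<in>UNIV. y s' a * pmf (P s' a) s) = (\<Sum>a\<in>UNIV. y s a)) \<and>
     (\<Sum>s\<in>UNIV. \<Sum>a\<in>UNIV. y s a) = 1"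

definition lp_objective :: "('s::finite \<Rightarrow> bool \<Rightarrow> real) \<Rightarrow> ('s \<Rightarrow> bool \<Rightarrow> real) \<Rightarrow> real" where
  "lp_objective r y = (\<Sum>s\<in>UNIV. \<Sum>a\<in>UNIV. r s a * y s a)"

definition lp_optimal :: "('s::finite \<Rightarrow> bool \<Rightarrow> 's pmf) \<Rightarrow> ('s \<Rightarrow> bool \<Rightarrow> real) \<Rightarrow> real \<Rightarrow> ('s \<Rightarrow> bool \<Rightarrow> real) \<Rightarrow> bool" where
  "lp_optimal P r \<alpha> y \<longleftrightarrow> lp_feasible P \<alpha> y \<and>
     (\<forall>y'. lp_feasible P \<alpha> y' \<longrightarrow> lp_objective r y' \<le> lp_objective r y)"

definition pibar :: "('s \<Rightarrow> bool \<Rightarrow> real) \<Rightarrow> 's \<Rightarrow> bool \<Rightarrow> real" where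
  "pibar y s a = (if y s False + y s True > 0 then y s a / (y s False + y s True) else 1/2)"

definition Ppi :: "('s::finite \<Rightarrow> bool \<Rightarrow> 's pmf) \<Rightarrow> ('s \<Rightarrow> bool \<Rightarrow> real) \<Rightarrow> 's \<Rightarrow> 's \<Rightarrow> real" where
  "Ppi P y s s' = (\<Sum>a\<in>UNIV. pibar y s a * pmf (P s a) s')"

definition mu :: "('s \<Rightarrow> bool \<Rightarrow> real) \<Rightarrow> 's \<Rightarrow> real" where
  "mu y s = y s False + y s True"

definition Phi :: "('s::finite \<Rightarrow> bool \<Rightarrow> 's pmf) \<Rightarrow> ('s \<Rightarrow> bool \<Rightarrow> real) \<Rightarrow> real \<Rightarrow> 's \<Rightarrow> 's \<Rightarrow> 's \<Rightarrow> real" where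
  "Phi P y \<alpha> st s s' = Ppi P y s s' - mu y s'
      - (pibar y s True - \<alpha>) * (pmf (P st True) s' - pmf (P st False) s')"

definition Splus :: "('s \<Rightarrow> bool \<Rightarrow> real) \<Rightarrow> 's set" where
  "Splus y = {s. y s True > 0 \<and> y s False = 0}"
definition Sminus :: "('s \<Rightarrow> bool \<Rightarrow> real) \<Rightarrow> 's set" where
  "Sminus y = {s. y s True = 0 \<and> y s False > 0}"
definition Sempty :: "('s \<Rightarrow> bool \<Rightarrow> real) \<Rightarrow> 's set" where
  "Sempty y = {s. y s True = 0 \<and> y s False = 0}"

definition rround :: "real \<Rightarrow> nat pmf" where
  "rround c = map_pmf (\<lambda>b. if b then nat \<lceil>c\<rceil> else nat \<lfloor>c\<rfloor>) (bernoulli_pmf (c - of_int \<lfloor>c\<rfloor>))"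

text \<open>Number of arms of D in state s (i.e. z(s) = N X(D,s)), and scaled fraction X(D,s).\<close>
definition cnt :: "nat set \<Rightarrow> (nat \<Rightarrow> 's) \<Rightarrow> 's \<Rightarrow> nat" where
  "cnt D S s = card {i\<in>D. S i = s}"

definition Xfrac :: "nat \<Rightarrow> nat set \<Rightarrow> (nat \<Rightarrow> 's) \<Rightarrow> 's \<Rightarrow> real" where
  "Xfrac N D S s = real (cnt D S s) / real N"

definition olc_condition :: "('s::finite \<Rightarrow> bool \<Rightarrow> real) \<Rightarrow> real \<Rightarrow> 's \<Rightarrow> nat set \<Rightarrow> (nat \<Rightarrow> 's) \<Rightarrow> bool" where
  "olc_condition y \<alpha> st D S \<longleftrightarrow>
     (\<Sum>s\<in>UNIV - {st}. pibar y s True * real (cnt D S s))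
        \<le> \<alpha> * real (card D) - real (card (Sempty y)) - 1 \<and>
     (\<Sum>s\<in>UNIV - {st}. pibar y s False * real (cnt D S s))
        \<le> (1 - \<alpha>) * real (card D) - real (card (Sempty y)) - 1"

text \<open>Optimal Local Control applied to the arm set D, as a distribution over action
  profiles (arms outside D are reported passive).\<close>
definition olc :: "('s::finite \<Rightarrow> bool \<Rightarrow> real) \<Rightarrow> real \<Rightarrow> 's \<Rightarrow> nat set \<Rightarrow> (nat \<Rightarrow> 's) \<Rightarrow> (nat \<Rightarrow> bool) pmf" where
  "olc y \<alpha> st D S =
     bind_pmf (rround (\<alpha> * real (card D))) (\<lambda>B.
     bind_pmf (Pi_pmf (Sempty y) 0 (\<lambda>s. rround (real (cnt D S s) / 2))) (\<lambda>K.
     bind_pmf (Pi_pmf (Sempty y) {} (\<lambda>s. pmf_of_set {T. T \<subseteq> {i\<in>D. S i = s} \<and> card T = K s})) (\<lambda>T.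
     bind_pmf (pmf_of_set {U. U \<subseteq> {i\<in>D. S i = st} \<and>
                 card U = B - card {i\<in>D. S i \<in> Splus y} - (\<Sum>s\<in>Sempty y. K s)}) (\<lambda>U.
     return_pmf (\<lambda>i. i \<in> D \<and> (S i \<in> Splus y \<or> (S i \<in> Sempty y \<and> i \<in> T (S i)) \<or>
                                 (S i = st \<and> i \<in> U)))))))"

definition next_states :: "('s \<Rightarrow> bool \<Rightarrow> 's pmf) \<Rightarrow> nat \<Rightarrow> (nat \<Rightarrow> 's) \<Rightarrow> (nat \<Rightarrow> bool) \<Rightarrow> (nat \<Rightarrow> 's) pmf" where
  "next_states P N S A = Pi_pmf {..<N} undefined (\<lambda>i. P (S i) (A i))"

definition olc_step :: "('s::finite \<Rightarrow> bool \<Rightarrow> 's pmf) \<Rightarrow> ('s \<Rightarrow> bool \<Rightarrow> real) \<Rightarrow> real \<Rightarrow> 's \<Rightarrow> nat \<Rightarrow> (nat \<Rightarrow> 's) \<Rightarrow> (nat \<Rightarrow> 's) pmf" where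
  "olc_step P y \<alpha> st N S = bind_pmf (olc y \<alpha> st {..<N} S) (next_states P N S)"

end

theory Submission
  imports Defs
begin
lemma exp_bind_bounded:
  fixes g :: "'b \<Rightarrow> real"
  assumes "\<And>y. \<bar>g y\<bar> \<le> c"
  shows "measure_pmf.expectation (bind_pmf M f) g = measure_pmf.expectation M (\<lambda>x. measure_pmf.expectation (f x) g)"
  unfolding measure_pmf_bind
  by (rule integral_bind[where K="count_space UNIV" and B=c and B'=1])
     (auto simp: assms measure_pmf_in_subprob_algebra measure_pmf.prob_space_axioms prob_space.finite_measure intro!: measure_pmf.emeasure_le_1)

lemma exp_const_on_support:
  fixes f :: "'a \<Rightarrow> real"
  assumes "\<And>x. x \<in> set_pmf M \<Longrightarrow> f x = c"
  shows "measure_pmf.expectation M f = c"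
proof -
  have "measure_pmf.expectation M f = measure_pmf.expectation M (\<lambda>_. c)"
    by (intro integral_cong_AE) (auto simp: AE_measure_pmf_iff assms)
  then show ?thesis by simp
qed

lemma rround_int: "rround (real m) = return_pmf m"
proof -
  have a: "nat \<lceil>real m\<rceil> = m" "nat \<lfloor>real m\<rfloor> = m" by simp_all
  show ?thesis unfolding rround_def a by (simp add: map_pmf_const)
qed

lemma rround_set: "x \<in> set_pmf (rround c) \<Longrightarrow> x = nat \<lfloor>c\<rfloor> \<or> x = nat \<lceil>c\<rceil>"
  unfolding rround_def by auto

lemma rround_exp:
  assumes "0 \<le> c"
  shows "measure_pmf.expectation (rround c) real = c"
proof -
  have p: "0 \<le> c - of_int \<lfloor>c\<rfloor>" "c - of_int \<lfloor>c\<rfloor> \<le> 1" by linarith+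
  have "measure_pmf.expectation (rround c) real
      = real (nat \<lceil>c\<rceil>) * (c - of_int \<lfloor>c\<rfloor>) + real (nat \<lfloor>c\<rfloor>) * (1 - (c - of_int \<lfloor>c\<rfloor>))"
    unfolding rround_def using p by simp
  also have "\<dots> = c"
  proof (cases "c = of_int \<lfloor>c\<rfloor>")
    case True
    have z: "c - of_int \<lfloor>c\<rfloor> = 0" using True by simp
    have f: "real (nat \<lfloor>c\<rfloor>) = of_int \<lfloor>c\<rfloor>" using assms by simp
    show ?thesis unfolding z f using True by simp
  next
    case False
    then have "\<lceil>c\<rceil> = \<lfloor>c\<rfloor> + 1"
      by (metis ceiling_altdef)
    then show ?thesis using assms by (simp add: algebra_simps)
  qed
  finally show ?thesis .
qed

lemma exp_Pi_component:
  fixes f :: "'b \<Rightarrow> real"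
  assumes "finite A" "s \<in> A"
  shows "measure_pmf.expectation (Pi_pmf A d p) (\<lambda>K. f (K s)) = measure_pmf.expectation (p s) f"
proof -
  have "measure_pmf.expectation (Pi_pmf A d p) (\<lambda>K. f (K s)) = measure_pmf.expectation (map_pmf (\<lambda>K. K s) (Pi_pmf A d p)) f"
    by simp
  also have "map_pmf (\<lambda>K. K s) (Pi_pmf A d p) = p s" using assms by (simp add: Pi_pmf_component)
  finally show ?thesis .
qed

lemma int_Pi_component:
  fixes f :: "'b \<Rightarrow> real"
  assumes "finite A" "s \<in> A" "integrable (measure_pmf (p s)) f"
  shows "integrable (measure_pmf (Pi_pmf A d p)) (\<lambda>K. f (K s))"
proof -
  have "map_pmf (\<lambda>K. K s) (Pi_pmf A d p) = p s" using assms by (simp add: Pi_pmf_component)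
  then have "integrable (measure_pmf (map_pmf (\<lambda>K. K s) (Pi_pmf A d p))) f" using assms by simp
  then show ?thesis by simp
qed

lemma rround_finite: "finite (set_pmf (rround c))"
  unfolding rround_def by simp

lemma sum_group_active:
  fixes S :: "nat \<Rightarrow> 's::finite"
  assumes "finite D"
  shows "(\<Sum>i\<in>D. if A i then d (S i) else (0::real)) = (\<Sum>s\<in>UNIV. d s * real (card {i\<in>D. S i = s \<and> A i}))"
proof -
  have "(\<Sum>i\<in>D. if A i then d (S i) else (0::real)) = (\<Sum>s\<in>UNIV. \<Sum>i\<in>{i\<in>D. S i = s}. if A i then d (S i) else 0)"
    using assms by (rule sum.group[symmetric]) auto
  also have "\<dots> = (\<Sum>s\<in>UNIV. d s * real (card {i\<in>D. S i = s \<and> A i}))"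
  proof (rule sum.cong[OF refl])
    fix s
    have "(\<Sum>i\<in>{i\<in>D. S i = s}. if A i then d (S i) else 0) = (\<Sum>i\<in>{i\<in>D. S i = s}. if A i then d s else 0)"
      by (rule sum.cong) auto
    also have "\<dots> = (\<Sum>i\<in>{i\<in>{i\<in>D. S i = s}. A i}. d s)"
      using assms by (subst sum.inter_filter) auto
    also have "{i\<in>{i\<in>D. S i = s}. A i} = {i\<in>D. S i = s \<and> A i}" by auto
    finally show "(\<Sum>i\<in>{i\<in>D. S i = s}. if A i then d (S i) else 0) = d s * real (card {i\<in>D. S i = s \<and> A i})"
      by simp
  qed
  finally show ?thesis .
qed

lemma card_states:
  fixes S :: "nat \<Rightarrow> 's::finite"
  assumes "finite D"
  shows "card {i\<in>D. S i \<in> X} = (\<Sum>s\<in>X. cnt D S s)"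
proof -
  have "card {i\<in>D. S i \<in> X} = (\<Sum>i\<in>{i\<in>D. S i \<in> X}. 1)" by simp
  also have "\<dots> = (\<Sum>s\<in>X. \<Sum>i\<in>{i\<in>{i\<in>D. S i \<in> X}. S i = s}. 1)"
    using assms by (intro sum.group[symmetric]) auto
  also have "\<dots> = (\<Sum>s\<in>X. cnt D S s)"
    unfolding cnt_def by (intro sum.cong) (auto intro!: arg_cong[where f=card])
  finally show ?thesis .
qed

lemma set_pmf_subsets:
  assumes "finite X" "k \<le> card X"
  shows "set_pmf (pmf_of_set {T. T \<subseteq> X \<and> card T = k}) = {T. T \<subseteq> X \<and> card T = k}"
proof -
  obtain T where "T \<subseteq> X" "card T = k" using obtain_subset_with_card_n[OF assms(2)] by metis
  then have ne: "{T. T \<subseteq> X \<and> card T = k} \<noteq> {}" by auto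
  have fin: "finite {T. T \<subseteq> X \<and> card T = k}" using assms(1) by auto
  show ?thesis using ne fin by simp
qed

lemma next_exp:
  fixes P :: "'s::finite \<Rightarrow> bool \<Rightarrow> 's pmf"
  shows "measure_pmf.expectation (next_states P N S A) (\<lambda>S'. Xfrac N {..<N} S' s')
       = (\<Sum>i<N. pmf (P (S i) (A i)) s') / real N"
proof -
  have X: "Xfrac N {..<N} S' s' = (\<Sum>i<N. (\<lambda>v. if v = s' then 1 else 0::real) (S' i)) / real N" for S'
    unfolding Xfrac_def cnt_def by (simp add: sum.If_cases Int_def)
  have e: "measure_pmf.expectation p (\<lambda>v. if v = s' then 1 else 0::real) = pmf p s'" for p :: "'s pmf"
    by (subst integral_measure_pmf_real[of "{s'}"]) (auto split: if_splits)
  have "measure_pmf.expectation (next_states P N S A) (\<lambda>S'. (\<Sum>i<N. (\<lambda>v. if v = s' then 1 else 0::real) (S' i)))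
       = (\<Sum>i<N. pmf (P (S i) (A i)) s')"
    unfolding next_states_def
  proof (subst Bochner_Integration.integral_sum)
    fix i assume "i \<in> {..<N}"
    then show "integrable (Pi_pmf {..<N} undefined (\<lambda>i. P (S i) (A i))) (\<lambda>S'. if S' i = s' then 1 else 0::real)"
      by (intro int_Pi_component[where f="\<lambda>v. if v = s' then 1 else 0::real"]) (auto intro: integrable_measure_pmf_finite)
  qed (auto simp: e exp_Pi_component[where f="\<lambda>v. if v = s' then 1 else 0::real"])
  then show ?thesis unfolding X by simp
qed

lemma rround_half:
  assumes "K \<in> set_pmf (rround (real n / 2))"
  shows "real K \<le> real n / 2 + 1/2" "real n / 2 - 1/2 \<le> real K" "K \<le> n"
proof -
  obtain k where "n = 2*k \<or> n = 2*k+1" by (metis odd_two_times_div_two_succ dvd_mult_div_cancel evenE)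
  then have "K = k \<or> K = k + 1 \<and> n = 2*k+1"
  proof
    assume n: "n = 2*k"
    have "real n / 2 = real k" using n by simp
    then show ?thesis using rround_set[OF assms] by simp
  next
    assume n: "n = 2*k+1"
    have e: "real n / 2 = real k + 1/2" using n by simp
    have f: "\<lfloor>real n / 2\<rfloor> = int k" unfolding e by (rule floor_unique) auto
    have c: "\<lceil>real n / 2\<rceil> = int k + 1" unfolding e by (rule ceiling_unique) auto
    show ?thesis using rround_set[OF assms] n f c by auto
  qed
  then show "real K \<le> real n / 2 + 1/2" "real n / 2 - 1/2 \<le> real K" "K \<le> n"
    using \<open>n = 2*k \<or> n = 2*k+1\<close> by (auto simp: field_simps)
qed



theorem lemma1:
  fixes P :: "'s::finite \<Rightarrow> bool \<Rightarrow> 's pmf"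
    and r :: "'s \<Rightarrow> bool \<Rightarrow> real"
    and \<alpha> :: real
    and y :: "'s \<Rightarrow> bool \<Rightarrow> real"
    and st :: 's
    and N :: nat
    and S :: "nat \<Rightarrow> 's"
  assumes "0 < \<alpha>" and "\<alpha> < 1"
    and "\<alpha> * real N \<in> \<nat>"
    and "lp_optimal P r \<alpha> y"
    and "y st False > 0" and "y st True > 0"
    and "\<And>s. y s False > 0 \<Longrightarrow> y s True > 0 \<Longrightarrow> s = st"
    and "olc_condition y \<alpha> st {..<N} S"
  shows "\<forall>s'. measure_pmf.expectation (olc_step P y \<alpha> st N S) (\<lambda>S'. Xfrac N {..<N} S' s') - mu y s'
           = (\<Sum>s\<in>UNIV. (Xfrac N {..<N} S s - mu y s) * Phi P y \<alpha> st s s')"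
proof (intro allI)
  fix s'
  define D where "D = {..<N}"
  define z where "z s = real (cnt D S s)" for s
  define d where "d s = pmf (P s True) s' - pmf (P s False) s'" for s
  define cp where "cp s = pibar y s True" for s
  define Sp where "Sp = Splus y"
  define Se where "Se = Sempty y"
  obtain m where m: "\<alpha> * real N = real m" using assms(3) Nats_cases by metis
  have feas: "lp_feasible P \<alpha> y" using assms(4) unfolding lp_optimal_def by simp
  have ynn: "\<And>s a. y s a \<ge> 0" using feas unfolding lp_feasible_def by simp
  have cls: "(s \<in> Sp \<and> s \<notin> Se \<and> cp s = 1) \<or> (s \<in> Se \<and> s \<notin> Sp \<and> cp s = 1/2) \<or> (s \<notin> Sp \<and> s \<notin> Se \<and> cp s = 0)"
    if "s \<noteq> st" for s
  proof -
    have "\<not> (y s False > 0 \<and> y s True > 0)" using assms(7) that by blast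
    moreover have "y s False \<ge> 0" "y s True \<ge> 0" using ynn by auto
    ultimately consider "y s False = 0" "y s True > 0" | "y s False > 0" "y s True = 0" | "y s False = 0" "y s True = 0"
      by linarith
    then show ?thesis
      by cases (auto simp: Sp_def Se_def Splus_def Sempty_def cp_def pibar_def)
  qed
  have stn: "st \<notin> Sp" "st \<notin> Se" using assms(5,6) by (auto simp: Sp_def Se_def Splus_def Sempty_def)
  have cpF: "pibar y s False = 1 - cp s" for s
  proof (cases "y s False + y s True > 0")
    case True then show ?thesis unfolding cp_def pibar_def by (simp add: field_simps)
  next
    case False then show ?thesis unfolding cp_def pibar_def by simp
  qed
  have finD: "finite D" unfolding D_def by simp
  have cardD: "card D = N" unfolding D_def by simp
  have sumz: "(\<Sum>s\<in>UNIV. z s) = real N"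
  proof -
    have "card {i\<in>D. S i \<in> UNIV} = (\<Sum>s\<in>UNIV. cnt D S s)" by (rule card_states[OF finD])
    then have "real N = real (\<Sum>s\<in>UNIV. cnt D S s)" using cardD by simp
    then show ?thesis unfolding z_def by simp
  qed
  have olc1: "(\<Sum>s\<in>UNIV-{st}. cp s * z s) \<le> \<alpha> * real N - real (card Se) - 1"
    using assms(8) unfolding olc_condition_def cp_def z_def Se_def D_def by simp
  have olc2: "(\<Sum>s\<in>UNIV-{st}. (1 - cp s) * z s) \<le> (1 - \<alpha>) * real N - real (card Se) - 1"
    using assms(8) unfolding olc_condition_def z_def Se_def D_def cpF[symmetric] by simp
  have Npos: "N > 0"
  proof (rule ccontr)
    assume "\<not> N > 0"
    then have "N = 0" by simp
    then have "\<And>s. z s = 0" unfolding z_def cnt_def D_def by simp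
    then show False using olc1 \<open>N = 0\<close> by simp
  qed

  define a' where "a' K s = (if s \<in> Sp then z s else if s \<in> Se then real (K s) else 0)" for K :: "'s \<Rightarrow> nat" and s
  define Kp where "Kp = Pi_pmf Se 0 (\<lambda>s. rround (real (cnt D S s) / 2))"
  define h where "h K = ((\<Sum>s\<in>UNIV. z s * pmf (P s False) s') + real m * d st
        + (\<Sum>s\<in>UNIV-{st}. a' K s * (d s - d st))) / real N" for K
  define f where "f A = (\<Sum>i<N. pmf (P (S i) (A i)) s') / real N" for A :: "nat \<Rightarrow> bool"

  have finSe: "finite Se" by simp
  have Kset: "K s \<in> set_pmf (rround (real (cnt D S s) / 2))" if "K \<in> set_pmf Kp" "s \<in> Se" for K s
    using that unfolding Kp_def set_Pi_pmf[OF finSe] PiE_dflt_def by auto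
  have pers: "\<bar>a' K s - cp s * z s\<bar> \<le> (if s \<in> Se then 1/2 else 0)" if K: "K \<in> set_pmf Kp" and sn: "s \<noteq> st" for K s
  proof -
    consider "s \<in> Sp" "s \<notin> Se" "cp s = 1" | "s \<in> Se" "s \<notin> Sp" "cp s = 1/2" | "s \<notin> Sp" "s \<notin> Se" "cp s = 0"
      using cls[OF sn] by blast
    then show ?thesis
    proof cases
      case 2
      have "\<bar>real (K s) - 1/2 * real (cnt D S s)\<bar> \<le> 1/2"
        using rround_half[OF Kset[OF K 2(1)]] unfolding abs_le_iff by (intro conjI; linarith)
      then show ?thesis using 2 unfolding a'_def z_def 2(3) by simp
    qed (auto simp: a'_def)
  qed
  have sumSe: "(\<Sum>s\<in>UNIV-{st}. if s \<in> Se then 1/2 else 0::real) = real (card Se) / 2"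
  proof -
    have "(\<Sum>s\<in>UNIV-{st}. if s \<in> Se then 1/2 else 0::real) = (\<Sum>s\<in>(UNIV-{st}) \<inter> Se. 1/2)"
      using sum.inter_restrict[of "UNIV-{st}" "\<lambda>_. 1/2::real" Se] by simp
    also have "(UNIV-{st}) \<inter> Se = Se" using stn by auto
    finally show ?thesis by simp
  qed
  have lowup: "(\<Sum>s\<in>UNIV-{st}. cp s * z s) - real (card Se)/2 \<le> (\<Sum>s\<in>UNIV-{st}. a' K s)
      \<and> (\<Sum>s\<in>UNIV-{st}. a' K s) \<le> (\<Sum>s\<in>UNIV-{st}. cp s * z s) + real (card Se)/2"
    if "K \<in> set_pmf Kp" for K
  proof -
    have "(\<Sum>s\<in>UNIV-{st}. a' K s) - (\<Sum>s\<in>UNIV-{st}. cp s * z s) = (\<Sum>s\<in>UNIV-{st}. a' K s - cp s * z s)"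
      by (simp add: sum_subtractf)
    moreover have "\<bar>\<Sum>s\<in>UNIV-{st}. a' K s - cp s * z s\<bar> \<le> (\<Sum>s\<in>UNIV-{st}. if s \<in> Se then 1/2 else 0::real)"
      by (rule order.trans[OF sum_abs]) (intro sum_mono pers[OF that], auto)
    ultimately show ?thesis using sumSe unfolding abs_le_iff by (intro conjI; linarith)
  qed
  have b1: "(\<Sum>s\<in>UNIV-{st}. a' K s) + 1 \<le> real m" if "K \<in> set_pmf Kp" for K
    using lowup[OF that] olc1 m by linarith
  have zst: "z st = real N - (\<Sum>s\<in>UNIV-{st}. z s)"
    using sumz sum.remove[of UNIV st z] by simp
  have b2: "real m - (\<Sum>s\<in>UNIV-{st}. a' K s) \<le> z st" if "K \<in> set_pmf Kp" for K
  proof -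
    have "(\<Sum>s\<in>UNIV-{st}. (1 - cp s) * z s) = (\<Sum>s\<in>UNIV-{st}. z s) - (\<Sum>s\<in>UNIV-{st}. cp s * z s)"
      by (simp add: algebra_simps sum_subtractf)
    then show ?thesis using lowup[OF that] olc2 m zst by (simp add: algebra_simps)
  qed
  have a'sum: "(\<Sum>s\<in>UNIV-{st}. a' K s) = real (card {i\<in>D. S i \<in> Sp}) + real (\<Sum>s\<in>Se. K s)" for K
  proof -
    have SpSe: "Sp \<inter> Se = {}" unfolding Sp_def Se_def Splus_def Sempty_def by auto
    have eq1: "(UNIV-{st}) \<inter> Sp = Sp" using stn by auto
    have eq2: "(UNIV-{st}) \<inter> Se = Se" using stn by auto
    have "(\<Sum>s\<in>UNIV-{st}. a' K s) = (\<Sum>s\<in>UNIV-{st}. (if s \<in> Sp then z s else 0) + (if s \<in> Se then real (K s) else 0))"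
      unfolding a'_def using SpSe by (intro sum.cong) auto
    also have "\<dots> = (\<Sum>s\<in>(UNIV-{st}) \<inter> Sp. z s) + (\<Sum>s\<in>(UNIV-{st}) \<inter> Se. real (K s))"
      using sum.inter_restrict[of "UNIV-{st}" z Sp] sum.inter_restrict[of "UNIV-{st}" "\<lambda>s. real (K s)" Se]
      by (simp add: sum.distrib)
    also have "\<dots> = (\<Sum>s\<in>Sp. z s) + (\<Sum>s\<in>Se. real (K s))" unfolding eq1 eq2 ..
    finally show ?thesis unfolding z_def card_states[OF finD] by simp
  qed

  define Tp where "Tp K = Pi_pmf Se {} (\<lambda>s. pmf_of_set {T. T \<subseteq> {i\<in>D. S i = s} \<and> card T = K s})" for K :: "'s \<Rightarrow> nat"
  define Up where "Up K = pmf_of_set {U. U \<subseteq> {i\<in>D. S i = st} \<and>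
                 card U = m - card {i\<in>D. S i \<in> Sp} - (\<Sum>s\<in>Se. K s)}" for K :: "'s \<Rightarrow> nat"
  define Aexp where "Aexp T U = (\<lambda>i. i \<in> D \<and> (S i \<in> Sp \<or> (S i \<in> Se \<and> i \<in> T (S i)) \<or> (S i = st \<and> i \<in> U)))"
    for T :: "'s \<Rightarrow> nat set" and U
  have olc_eq: "olc y \<alpha> st {..<N} S = bind_pmf Kp (\<lambda>K. bind_pmf (Tp K) (\<lambda>T. bind_pmf (Up K) (\<lambda>U. return_pmf (Aexp T U))))"
    unfolding olc_def Kp_def Tp_def Up_def Aexp_def Sp_def Se_def D_def using m by (simp add: rround_int bind_return_pmf)

  have inner: "measure_pmf.expectation (bind_pmf (Tp K) (\<lambda>T. bind_pmf (Up K) (\<lambda>U. return_pmf (Aexp T U)))) f = h K"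
    if K: "K \<in> set_pmf Kp" for K
  proof (rule exp_const_on_support)
    fix x assume "x \<in> set_pmf (bind_pmf (Tp K) (\<lambda>T. bind_pmf (Up K) (\<lambda>U. return_pmf (Aexp T U))))"
    then obtain T U where T: "T \<in> set_pmf (Tp K)" and U: "U \<in> set_pmf (Up K)" and x: "x = Aexp T U"
      by auto
    have Tprop: "T s \<subseteq> {i\<in>D. S i = s} \<and> card (T s) = K s" if "s \<in> Se" for s
    proof -
      have "T s \<in> set_pmf (pmf_of_set {T. T \<subseteq> {i\<in>D. S i = s} \<and> card T = K s})"
        using T that unfolding Tp_def set_Pi_pmf[OF finSe] PiE_dflt_def by auto
      moreover have "K s \<le> card {i\<in>D. S i = s}"
        using rround_half(3)[OF Kset[OF K that]] unfolding cnt_def by simp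
      ultimately show ?thesis using finD by (subst (asm) set_pmf_subsets) auto
    qed
    have bnd1: "card {i\<in>D. S i \<in> Sp} + (\<Sum>s\<in>Se. K s) \<le> m"
      using b1[OF K] a'sum[of K] by linarith
    have bnd2: "m - card {i\<in>D. S i \<in> Sp} - (\<Sum>s\<in>Se. K s) \<le> card {i\<in>D. S i = st}"
    proof -
      have "real (m - card {i\<in>D. S i \<in> Sp} - (\<Sum>s\<in>Se. K s)) = real m - (\<Sum>s\<in>UNIV-{st}. a' K s)"
        using bnd1 a'sum[of K] by (simp add: of_nat_diff)
      also have "\<dots> \<le> z st" by (rule b2[OF K])
      finally show ?thesis unfolding z_def cnt_def by simp
    qed
    have Uprop: "U \<subseteq> {i\<in>D. S i = st} \<and> card U = m - card {i\<in>D. S i \<in> Sp} - (\<Sum>s\<in>Se. K s)"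
      using U bnd2 finD unfolding Up_def by (subst (asm) set_pmf_subsets) auto
    have cntU: "real (card U) = real m - (\<Sum>s\<in>UNIV-{st}. a' K s)"
      using Uprop bnd1 a'sum[of K] by (simp add: of_nat_diff)
    have cntA: "real (card {i\<in>D. S i = s \<and> x i}) = (if s = st then real m - (\<Sum>s\<in>UNIV-{st}. a' K s) else a' K s)" for s
    proof (cases "s = st")
      case True
      have "{i\<in>D. S i = s \<and> x i} = U" using True Uprop stn unfolding x Aexp_def by auto
      then show ?thesis using True cntU by simp
    next
      case False
      consider "s \<in> Sp" "s \<notin> Se" | "s \<in> Se" "s \<notin> Sp" | "s \<notin> Sp" "s \<notin> Se"
        using cls[OF False] by blast
      then show ?thesis
      proof cases
        case 1
        have "{i\<in>D. S i = s \<and> x i} = {i\<in>D. S i = s}" using 1 unfolding x Aexp_def by auto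
        then show ?thesis using 1 False unfolding a'_def z_def cnt_def by simp
      next
        case 2
        have "{i\<in>D. S i = s \<and> x i} = T s" using 2 False Tprop[OF 2(1)] unfolding x Aexp_def by auto
        then show ?thesis using 2 False Tprop[OF 2(1)] unfolding a'_def by simp
      next
        case 3
        have e3: "{i\<in>D. S i = s \<and> x i} = {}" using 3 False unfolding x Aexp_def by auto
        show ?thesis using 3 False unfolding a'_def e3 by simp
      qed
    qed
    have pmfx: "pmf (P (S i) (x i)) s' = pmf (P (S i) False) s' + (if x i then d (S i) else 0)" for i
      unfolding d_def by simp
    have "(\<Sum>i<N. pmf (P (S i) (x i)) s') = (\<Sum>i\<in>D. pmf (P (S i) False) s') + (\<Sum>i\<in>D. if x i then d (S i) else 0)"
      unfolding pmfx D_def by (simp add: sum.distrib)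
    also have "(\<Sum>i\<in>D. pmf (P (S i) False) s') = (\<Sum>s\<in>UNIV. z s * pmf (P s False) s')"
      using sum_group_active[OF finD, of "\<lambda>_. True" "\<lambda>s. pmf (P s False) s'" S]
      unfolding z_def cnt_def by (simp add: mult.commute)
    also have "(\<Sum>i\<in>D. if x i then d (S i) else 0) = (\<Sum>s\<in>UNIV. d s * real (card {i\<in>D. S i = s \<and> x i}))"
      by (rule sum_group_active[OF finD])
    also have "\<dots> = d st * (real m - (\<Sum>s\<in>UNIV-{st}. a' K s)) + (\<Sum>s\<in>UNIV-{st}. d s * a' K s)"
      unfolding cntA by (subst sum.remove[of UNIV st]) (auto intro!: sum.cong)
    also have "\<dots> = real m * d st + (\<Sum>s\<in>UNIV-{st}. a' K s * (d s - d st))"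
      by (simp add: algebra_simps sum_subtractf sum_distrib_left sum_distrib_right)
    finally show "f x = h K" unfolding f_def h_def by (simp add: add.assoc)
  qed

  have fb: "\<bar>f A\<bar> \<le> 1" for A
  proof -
    have "(\<Sum>i<N. pmf (P (S i) (A i)) s') \<le> (\<Sum>i<N. 1)" by (intro sum_mono) (simp add: pmf_le_1)
    moreover have "0 \<le> (\<Sum>i<N. pmf (P (S i) (A i)) s')" by (intro sum_nonneg) simp
    ultimately show ?thesis unfolding f_def using Npos by (simp add: field_simps)
  qed
  have Xb: "\<bar>Xfrac N {..<N} S' s'\<bar> \<le> 1" for S'
  proof -
    have "cnt {..<N} S' s' \<le> N" unfolding cnt_def
      using card_mono[of "{..<N}" "{i\<in>{..<N}. S' i = s'}"] by auto
    then show ?thesis unfolding Xfrac_def using Npos by (simp add: field_simps)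
  qed

  have intK: "integrable (measure_pmf Kp) (\<lambda>K. a' K s)" for s
  proof -
    have "integrable (measure_pmf Kp) (\<lambda>K. real (K s))" if "s \<in> Se"
      unfolding Kp_def by (rule int_Pi_component[OF finSe that]) (simp add: integrable_measure_pmf_finite rround_finite)
    then show ?thesis unfolding a'_def by (cases "s \<in> Sp"; cases "s \<in> Se") simp_all
  qed
  have expK: "measure_pmf.expectation Kp (\<lambda>K. a' K s) = cp s * z s" if sn: "s \<noteq> st" for s
  proof -
    consider "s \<in> Sp" "s \<notin> Se" "cp s = 1" | "s \<in> Se" "s \<notin> Sp" "cp s = 1/2" | "s \<notin> Sp" "s \<notin> Se" "cp s = 0"
      using cls[OF sn] by blast
    then show ?thesis
    proof cases
      case 2
      have "measure_pmf.expectation Kp (\<lambda>K. real (K s)) = real (cnt D S s) / 2"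
        unfolding Kp_def by (subst exp_Pi_component[OF finSe 2(1)]) (simp add: rround_exp)
      then show ?thesis using 2 unfolding a'_def z_def 2(3) by simp
    qed (auto simp: a'_def)
  qed
  have Eh: "measure_pmf.expectation Kp h = ((\<Sum>s\<in>UNIV. z s * pmf (P s False) s') + real m * d st
        + (\<Sum>s\<in>UNIV-{st}. cp s * z s * (d s - d st))) / real N"
  proof -
    have "measure_pmf.expectation Kp (\<lambda>K. \<Sum>s\<in>UNIV-{st}. a' K s * (d s - d st))
        = (\<Sum>s\<in>UNIV-{st}. measure_pmf.expectation Kp (\<lambda>K. a' K s) * (d s - d st))"
      using intK by (subst Bochner_Integration.integral_sum) auto
    also have "\<dots> = (\<Sum>s\<in>UNIV-{st}. cp s * z s * (d s - d st))"
      using expK by (intro sum.cong) auto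
    finally have e: "measure_pmf.expectation Kp (\<lambda>K. \<Sum>s\<in>UNIV-{st}. a' K s * (d s - d st))
        = (\<Sum>s\<in>UNIV-{st}. cp s * z s * (d s - d st))" .
    have i: "integrable (measure_pmf Kp) (\<lambda>K. \<Sum>s\<in>UNIV-{st}. a' K s * (d s - d st))"
      using intK by auto
    show ?thesis unfolding h_def
      by (subst integral_divide_zero, subst Bochner_Integration.integral_add) (use i e in auto)
  qed

  have E1: "measure_pmf.expectation (olc_step P y \<alpha> st N S) (\<lambda>S'. Xfrac N {..<N} S' s')
      = ((\<Sum>s\<in>UNIV. z s * pmf (P s False) s') + real m * d st
        + (\<Sum>s\<in>UNIV-{st}. cp s * z s * (d s - d st))) / real N"
  proof -
    have "measure_pmf.expectation (olc_step P y \<alpha> st N S) (\<lambda>S'. Xfrac N {..<N} S' s')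
        = measure_pmf.expectation (olc y \<alpha> st {..<N} S) f"
      unfolding olc_step_def by (subst exp_bind_bounded[OF Xb]) (simp only: next_exp f_def[abs_def])
    also have "\<dots> = measure_pmf.expectation Kp (\<lambda>K. measure_pmf.expectation
         (bind_pmf (Tp K) (\<lambda>T. bind_pmf (Up K) (\<lambda>U. return_pmf (Aexp T U)))) f)"
      unfolding olc_eq by (rule exp_bind_bounded[OF fb])
    also have "\<dots> = measure_pmf.expectation Kp h"
      by (intro integral_cong_AE) (auto simp: AE_measure_pmf_iff inner)
    finally show ?thesis using Eh by simp
  qed

  define X where "X s = z s / real N" for s
  define P0 where "P0 s = pmf (P s False) s'" for s
  have XS: "Xfrac N {..<N} S s = X s" for s unfolding X_def Xfrac_def z_def D_def by simp
  have sX: "(\<Sum>s\<in>UNIV. X s) = 1" unfolding X_def using sumz Npos by (simp add: sum_divide_distrib[symmetric])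
  have muA: "mu y s * pibar y s a = y s a" for s a
  proof (cases "y s False + y s True > 0")
    case True then show ?thesis unfolding mu_def pibar_def by simp
  next
    case False
    then have "y s False = 0" "y s True = 0" using ynn[of s False] ynn[of s True] by linarith+
    then show ?thesis unfolding mu_def pibar_def by (cases a) simp_all
  qed
  have sumbool: "(\<Sum>a\<in>UNIV. g a) = g False + g True" for g :: "bool \<Rightarrow> real"
    by (simp add: UNIV_bool)
  have sMu: "(\<Sum>s\<in>UNIV. mu y s) = 1"
    using feas unfolding lp_feasible_def mu_def by (simp add: sumbool)
  have sMuCp: "(\<Sum>s\<in>UNIV. mu y s * cp s) = \<alpha>"
    using feas unfolding lp_feasible_def cp_def muA by simp
  have PpiE: "Ppi P y s s' = P0 s + cp s * d s" for s
    unfolding Ppi_def sumbool cpF P0_def d_def cp_def by (simp add: algebra_simps)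
  have sMuPpi: "(\<Sum>s\<in>UNIV. mu y s * Ppi P y s s') = mu y s'"
  proof -
    have "(\<Sum>s\<in>UNIV. mu y s * Ppi P y s s') = (\<Sum>s\<in>UNIV. \<Sum>a\<in>UNIV. y s a * pmf (P s a) s')"
      unfolding Ppi_def sum_distrib_left by (simp add: mult.assoc[symmetric] muA)
    also have "\<dots> = (\<Sum>a\<in>UNIV. y s' a)" using feas unfolding lp_feasible_def by blast
    finally show ?thesis unfolding mu_def sumbool by simp
  qed
  have PhiE: "Phi P y \<alpha> st s s' = Ppi P y s s' - mu y s' - (cp s - \<alpha>) * d st" for s
    unfolding Phi_def cp_def d_def by simp
  have stzero: "(\<Sum>s\<in>UNIV-{st}. cp s * z s * (d s - d st)) = (\<Sum>s\<in>UNIV. cp s * z s * (d s - d st))"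
    by (subst sum.remove[of UNIV st]) simp_all
  have pw: "(X s - mu y s) * Phi P y \<alpha> st s s' = X s * P0 s + cp s * X s * d s - mu y s' * X s - d st * (cp s * X s)
      + \<alpha> * d st * X s - mu y s * Ppi P y s s' + mu y s' * mu y s + d st * (mu y s * cp s) - \<alpha> * d st * mu y s" for s
    unfolding PhiE using PpiE[of s] by (simp add: algebra_simps)
  have RHS: "(\<Sum>s\<in>UNIV. (X s - mu y s) * Phi P y \<alpha> st s s') = (\<Sum>s\<in>UNIV. X s * P0 s) + (\<Sum>s\<in>UNIV. cp s * X s * d s)
      - mu y s' * (\<Sum>s\<in>UNIV. X s) - d st * (\<Sum>s\<in>UNIV. cp s * X s) + \<alpha> * d st * (\<Sum>s\<in>UNIV. X s)
      - (\<Sum>s\<in>UNIV. mu y s * Ppi P y s s') + mu y s' * (\<Sum>s\<in>UNIV. mu y s) + d st * (\<Sum>s\<in>UNIV. mu y s * cp s)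
      - \<alpha> * d st * (\<Sum>s\<in>UNIV. mu y s)"
    unfolding pw by (simp add: sum.distrib sum_subtractf sum_distrib_left)
  have A1: "(\<Sum>s\<in>UNIV. X s * P0 s) = (\<Sum>s\<in>UNIV. z s * pmf (P s False) s') / real N"
    unfolding X_def P0_def by (simp add: sum_divide_distrib)
  have A2: "(\<Sum>s\<in>UNIV. cp s * X s * d s) = (\<Sum>s\<in>UNIV. cp s * z s * d s) / real N"
    unfolding X_def by (simp add: sum_divide_distrib)
  have A3: "(\<Sum>s\<in>UNIV. cp s * X s) = (\<Sum>s\<in>UNIV. cp s * z s) / real N"
    unfolding X_def by (simp add: sum_divide_distrib)
  have A4: "(\<Sum>s\<in>UNIV. cp s * z s * (d s - d st)) = (\<Sum>s\<in>UNIV. cp s * z s * d s) - d st * (\<Sum>s\<in>UNIV. cp s * z s)"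
    by (simp add: algebra_simps sum_subtractf sum_distrib_left)
  have mN: "real m / real N = \<alpha>" using m Npos by (simp add: field_simps)
  show "measure_pmf.expectation (olc_step P y \<alpha> st N S) (\<lambda>S'. Xfrac N {..<N} S' s') - mu y s'
           = (\<Sum>s\<in>UNIV. (Xfrac N {..<N} S s - mu y s) * Phi P y \<alpha> st s s')"
    unfolding E1 XS RHS stzero A4 sX sMu sMuCp sMuPpi A1 A2 A3
    using mN Npos by (simp add: field_simps)
qed


end
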